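(* There are absolute constants $c_1,C_1>0$ such that for every $d\in\mathbb N$, every finite nonempty set $Q\subset\mathbb Z^d$, every measurable set $B\subset\mathbb T^d$ with $|B|\le c_1|Q|^{-1}$, and every $f\in\mathcal T(Q)$, $$ \|f\|_{L_\infty(\mathbb T^d)}\le C_1|Q|^{1/2}\|f\|_{L_\infty(\mathbb T^d\setminus B)}. $$
   Context: $\mathbb T^d=[0,2\pi)^d$ (the $d$-dimensional torus), $|B|$ denotes the normalized Lebesgue measure $(2\pi)^{-d}\lambda(B)$ of $B$, and $|Q|$ is the cardinality of $Q$. $\mathcal T(Q)=\{f(\mathbf x)=\sum_{\mathbf k\in Q}c_{\mathbf k}e^{i(\mathbf k,\mathbf x)}: c_{\mathbf k}\in\mathbb C\}$. $\|f\|_{L_\infty(S)}=\sup_{\mathbf x\in S}|f(\mathbf x)|$. *)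

theory Defs
  imports "HOL-Probability.Probability"
begin

text \<open>Points of the d-dimensional torus [0,2pi)^d are represented as extensional
functions nat => real with coordinates indexed by {..<d}.\<close>
definition torus :: "nat \<Rightarrow> (nat \<Rightarrow> real) set" where
  "torus d = PiE {..<d} (\<lambda>_. {0..<2*pi})"

definition lebesgue_d :: "nat \<Rightarrow> (nat \<Rightarrow> real) measure" where
  "lebesgue_d d = completion (PiM {..<d} (\<lambda>_. lborel))"

definition norm_meas :: "nat \<Rightarrow> (nat \<Rightarrow> real) set \<Rightarrow> real" where
  "norm_meas d B = measure (lebesgue_d d) B / (2*pi)^d"

definition lattice :: "nat \<Rightarrow> (nat \<Rightarrow> int) set" where
  "lattice d = {k. \<forall>i\<ge>d. k i = 0}"

definition trig_poly :: "nat \<Rightarrow> (nat \<Rightarrow> int) set \<Rightarrow> ((nat \<Rightarrow> int) \<Rightarrow> complex)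
    \<Rightarrow> (nat \<Rightarrow> real) \<Rightarrow> complex" where
  "trig_poly d Q c x = (\<Sum>k\<in>Q. c k * exp (\<i> * complex_of_real (\<Sum>j<d. real_of_int (k j) * x j)))"

definition sup_norm :: "((nat \<Rightarrow> real) \<Rightarrow> complex) \<Rightarrow> (nat \<Rightarrow> real) set \<Rightarrow> real" where
  "sup_norm f S = (SUP x\<in>S. cmod (f x))"

end

theory Submission
  imports Defs
begin


lemma one_dim_int:
  fixes n :: int
  shows "integrable lborel (\<lambda>t. indicator {0..<2*pi} t *\<^sub>R exp (\<i> * of_int n * of_real t))"
proof -
  have "set_integrable lborel {0..2*pi} (\<lambda>t. exp (\<i> * of_int n * of_real t))"
    by (intro borel_integrable_atLeastAtMost' continuous_intros)
  then have "set_integrable lborel {0..<2*pi} (\<lambda>t. exp (\<i> * of_int n * of_real t))"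
    by (rule set_integrable_subset) auto
  then show ?thesis unfolding set_integrable_def .
qed

lemma one_dim_val:
  fixes n :: int
  shows "(\<integral>t. indicator {0..<2*pi} t *\<^sub>R exp (\<i> * of_int n * of_real t) \<partial>lborel) = (if n = 0 then 2*pi else 0)"
proof -
  have "(\<integral>t. indicator {0..<2*pi} t *\<^sub>R exp (\<i> * of_int n * of_real t) \<partial>lborel)
     = (LBINT t : {0..<2*pi}. exp (\<i> * of_int n * of_real t))"
    by (simp add: set_lebesgue_integral_def)
  also have "\<dots> = (LBINT t = ereal 0..ereal (2*pi). exp (\<i> * of_int n * of_real t))"
    by (subst interval_integral_Ico) (auto simp: pi_ge_zero)
  also have "\<dots> = (if n = 0 then 2*pi else 0)"
  proof (cases "n = 0")
    case True
    have "(LBINT t = ereal 0..ereal (2*pi). exp (\<i> * of_int n * of_real t)) = of_real (2*pi) - of_real 0"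
      by (rule interval_integral_FTC_finite) (auto simp: True intro!: continuous_intros derivative_eq_intros)
    then show ?thesis using True by simp
  next
    case False
    let ?F = "\<lambda>t::real. exp (\<i> * of_int n * of_real t) / (\<i> * of_int n)"
    have "(LBINT t = ereal 0..ereal (2*pi). exp (\<i> * of_int n * of_real t)) = ?F (2*pi) - ?F 0"
    proof (rule interval_integral_FTC_finite)
      show "continuous_on {min 0 (2 * pi)..max 0 (2 * pi)} (\<lambda>t. exp (\<i> * of_int n * of_real t))"
        by (intro continuous_intros)
      fix x :: real
      have "((\<lambda>z. exp (\<i> * of_int n * z) / (\<i> * of_int n)) has_field_derivative exp (\<i> * of_int n * of_real x)) (at (of_real x))"
        using False by (auto intro!: derivative_eq_intros)
      then show "(?F has_vector_derivative exp (\<i> * of_int n * of_real x)) (at x within {min 0 (2 * pi)..max 0 (2 * pi)})"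
        by (rule has_vector_derivative_real_field)
    qed
    also have "?F (2*pi) = ?F 0"
    proof -
      have "exp (\<i> * of_int n * of_real (2*pi)) = exp ((2 * of_int n * pi) * \<i>)"
        by (simp add: algebra_simps)
      also have "\<dots> = 1" by (rule exp_integer_2pi) auto
      finally show ?thesis by simp
    qed
    finally show ?thesis using False by simp
  qed
  finally show ?thesis .
qed


abbreviation PP :: "nat \<Rightarrow> (nat \<Rightarrow> real) measure" where
  "PP d \<equiv> PiM {..<d} (\<lambda>_. lborel)"

lemma PP_sf: "product_sigma_finite (\<lambda>_::nat. lborel)"
  unfolding product_sigma_finite_def by (simp add: sigma_finite_lborel)

lemma orth_pointwise:
  fixes a :: "nat \<Rightarrow> int"
  assumes "x \<in> space (PP d)"
  shows "indicator (torus d) x *\<^sub>R exp (\<i> * of_real (\<Sum>j<d. real_of_int (a j) * x j))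
     = (\<Prod>j<d. indicator {0..<2*pi} (x j) *\<^sub>R exp (\<i> * of_int (a j) * of_real (x j)))"
proof -
  have ext: "x \<in> extensional {..<d}" using assms by (simp add: space_PiM PiE_def)
  have ind: "indicator (torus d) x = (\<Prod>j<d. indicator {0..<2*pi} (x j) :: real)"
  proof (cases "x \<in> torus d")
    case True
    then have "\<forall>j<d. x j \<in> {0..<2*pi}" by (auto simp: torus_def PiE_def)
    then show ?thesis using True by simp
  next
    case False
    then have "\<not> (\<forall>j<d. x j \<in> {0..<2*pi})" using ext by (auto simp: torus_def PiE_iff)
    then obtain j where "j < d" "x j \<notin> {0..<2*pi}" by blast
    have "(\<Prod>j<d. indicator {0..<2*pi} (x j) :: real) = 0"
      using \<open>j<d\<close> \<open>x j \<notin> {0..<2*pi}\<close> by (intro prod_zero) (auto intro!: bexI[of _ j])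
    then show ?thesis using False by simp
  qed
  have ex: "exp (\<i> * of_real (\<Sum>j<d. real_of_int (a j) * x j)) = (\<Prod>j<d. exp (\<i> * of_int (a j) * of_real (x j)))"
    by (simp add: sum_distrib_left exp_sum[symmetric] mult.assoc)
  show ?thesis unfolding ind ex scaleR_conv_of_real by (simp add: prod.distrib)
qed

lemma orth:
  fixes a :: "nat \<Rightarrow> int"
  shows "integrable (PP d) (\<lambda>x. indicator (torus d) x *\<^sub>R exp (\<i> * of_real (\<Sum>j<d. real_of_int (a j) * x j)))"
    and "(\<integral>x. indicator (torus d) x *\<^sub>R exp (\<i> * of_real (\<Sum>j<d. real_of_int (a j) * x j)) \<partial>PP d)
        = (if \<forall>j<d. a j = 0 then (2*pi)^d else 0)"
proof -
  interpret product_sigma_finite "\<lambda>_::nat. lborel" by (rule PP_sf)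
  have i1: "integrable (PP d) (\<lambda>x. \<Prod>j<d. indicator {0..<2*pi} (x j) *\<^sub>R exp (\<i> * of_int (a j) * of_real (x j)))"
    by (rule product_integrable_prod) (auto intro: one_dim_int)
  show "integrable (PP d) (\<lambda>x. indicator (torus d) x *\<^sub>R exp (\<i> * of_real (\<Sum>j<d. real_of_int (a j) * x j)))"
  proof -
    have "integrable (PP d) (\<lambda>x. indicator (torus d) x *\<^sub>R exp (\<i> * of_real (\<Sum>j<d. real_of_int (a j) * x j)))
      \<longleftrightarrow> integrable (PP d) (\<lambda>x. \<Prod>j<d. indicator {0..<2*pi} (x j) *\<^sub>R exp (\<i> * of_int (a j) * of_real (x j)))"
      by (rule Bochner_Integration.integrable_cong[OF refl]) (rule orth_pointwise)
    with i1 show ?thesis by blast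
  qed
  have "(\<integral>x. indicator (torus d) x *\<^sub>R exp (\<i> * of_real (\<Sum>j<d. real_of_int (a j) * x j)) \<partial>PP d)
      = (\<integral>x. (\<Prod>j<d. indicator {0..<2*pi} (x j) *\<^sub>R exp (\<i> * of_int (a j) * of_real (x j))) \<partial>PP d)"
    by (rule Bochner_Integration.integral_cong[OF refl]) (rule orth_pointwise)
  also have "\<dots> = (\<Prod>j<d. (\<integral>t. indicator {0..<2*pi} t *\<^sub>R exp (\<i> * of_int (a j) * of_real t) \<partial>lborel))"
    by (rule product_integral_prod) (auto intro: one_dim_int)
  also have "\<dots> = (\<Prod>j<d. complex_of_real (if a j = 0 then 2*pi else 0))"
    by (simp only: one_dim_val)
  also have "\<dots> = (if \<forall>j<d. a j = 0 then (2*pi)^d else 0)"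
    by (auto intro: prod_zero)
  finally show "(\<integral>x. indicator (torus d) x *\<^sub>R exp (\<i> * of_real (\<Sum>j<d. real_of_int (a j) * x j)) \<partial>PP d)
        = (if \<forall>j<d. a j = 0 then (2*pi)^d else 0)" .
qed

lemma meas_trig: "trig_poly d Q c \<in> borel_measurable (PP d)"
  unfolding trig_poly_def by measurable


lemma parseval_pointwise:
  "complex_of_real (indicator (torus d) x * (cmod (trig_poly d Q c x))^2)
   = (\<Sum>k\<in>Q. \<Sum>l\<in>Q. (c k * cnj (c l)) *
        (indicator (torus d) x *\<^sub>R exp (\<i> * of_real (\<Sum>j<d. real_of_int (k j - l j) * x j))))"
proof -
  have e: "exp (\<i> * of_real (\<Sum>j<d. real_of_int (k j) * x j)) * cnj (exp (\<i> * of_real (\<Sum>j<d. real_of_int (l j) * x j)))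
      = exp (\<i> * of_real (\<Sum>j<d. real_of_int (k j - l j) * x j))" for k l :: "nat \<Rightarrow> int"
  proof -
    have "exp (\<i> * of_real (\<Sum>j<d. real_of_int (k j) * x j)) * cnj (exp (\<i> * of_real (\<Sum>j<d. real_of_int (l j) * x j)))
       = exp (\<i> * of_real (\<Sum>j<d. real_of_int (k j) * x j) + (- \<i> * of_real (\<Sum>j<d. real_of_int (l j) * x j)))"
      by (simp add: exp_cnj mult_exp_exp)
    also have "\<i> * of_real (\<Sum>j<d. real_of_int (k j) * x j) + (- \<i> * of_real (\<Sum>j<d. real_of_int (l j) * x j))
        = \<i> * of_real (\<Sum>j<d. real_of_int (k j - l j) * x j)"
      by (simp add: algebra_simps sum_subtractf)
    finally show ?thesis .
  qed
  have "complex_of_real ((cmod (trig_poly d Q c x))^2) = trig_poly d Q c x * cnj (trig_poly d Q c x)"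
    by (rule complex_norm_square)
  also have "\<dots> = (\<Sum>k\<in>Q. \<Sum>l\<in>Q. (c k * cnj (c l)) * exp (\<i> * of_real (\<Sum>j<d. real_of_int (k j - l j) * x j)))"
    unfolding trig_poly_def cnj_sum sum_distrib_right unfolding sum_distrib_left
    by (intro sum.cong refl) (subst e[symmetric], simp only: complex_cnj_mult mult_ac)
  finally show ?thesis
    by (simp add: scaleR_conv_of_real sum_distrib_left algebra_simps)
qed

lemma parseval:
  assumes Q: "finite Q" "Q \<subseteq> lattice d"
  shows "integrable (PP d) (\<lambda>x. indicator (torus d) x * (cmod (trig_poly d Q c x))^2)"
    and "(\<integral>x. indicator (torus d) x * (cmod (trig_poly d Q c x))^2 \<partial>PP d) = (2*pi)^d * (\<Sum>k\<in>Q. (cmod (c k))^2)"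
proof -
  let ?g = "\<lambda>k l x. (c k * cnj (c l)) *
        (indicator (torus d) x *\<^sub>R exp (\<i> * of_real (\<Sum>j<d. real_of_int (k j - l j) * x j)))"
  have gi: "integrable (PP d) (?g k l)" for k l
    by (rule integrable_mult_right) (rule orth(1)[of d "\<lambda>j. k j - l j"])
  have ci: "integrable (PP d) (\<lambda>x. \<Sum>k\<in>Q. \<Sum>l\<in>Q. ?g k l x)"
    by (intro Bochner_Integration.integrable_sum gi)
  have eqf: "(\<lambda>x. complex_of_real (indicator (torus d) x * (cmod (trig_poly d Q c x))^2)) = (\<lambda>x. \<Sum>k\<in>Q. \<Sum>l\<in>Q. ?g k l x)"
    by (rule ext) (rule parseval_pointwise)
  have "integrable (PP d) (\<lambda>x. complex_of_real (indicator (torus d) x * (cmod (trig_poly d Q c x))^2))"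
    unfolding eqf by (rule ci)
  from integrable_Re[OF this] show "integrable (PP d) (\<lambda>x. indicator (torus d) x * (cmod (trig_poly d Q c x))^2)" by simp
  have "complex_of_real (\<integral>x. indicator (torus d) x * (cmod (trig_poly d Q c x))^2 \<partial>PP d)
      = (\<integral>x. (\<Sum>k\<in>Q. \<Sum>l\<in>Q. ?g k l x) \<partial>PP d)"
    by (simp only: integral_complex_of_real[symmetric] eqf)
  also have "\<dots> = (\<Sum>k\<in>Q. (\<integral>x. (\<Sum>l\<in>Q. ?g k l x) \<partial>PP d))"
    by (rule Bochner_Integration.integral_sum) (intro Bochner_Integration.integrable_sum gi)
  also have "\<dots> = (\<Sum>k\<in>Q. \<Sum>l\<in>Q. (\<integral>x. ?g k l x \<partial>PP d))"
    by (intro sum.cong refl Bochner_Integration.integral_sum gi)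
  also have "\<dots> = (\<Sum>k\<in>Q. \<Sum>l\<in>Q. (c k * cnj (c l)) * (\<integral>x. indicator (torus d) x *\<^sub>R exp (\<i> * of_real (\<Sum>j<d. real_of_int (k j - l j) * x j)) \<partial>PP d))"
    by (intro sum.cong refl integral_mult_right_zero)
  also have "\<dots> = (\<Sum>k\<in>Q. \<Sum>l\<in>Q. (c k * cnj (c l)) * (if \<forall>j<d. k j - l j = 0 then (2*pi)^d else 0))"
    by (simp only: orth(2))
  also have "\<dots> = (\<Sum>k\<in>Q. \<Sum>l\<in>Q. (c k * cnj (c l)) * (if k = l then (2*pi)^d else 0))"
  proof (intro sum.cong refl)
    fix k l assume "k \<in> Q" "l \<in> Q"
    then have kl: "\<forall>j\<ge>d. k j = 0" "\<forall>j\<ge>d. l j = 0" using Q(2) unfolding lattice_def by auto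
    have "(\<forall>j<d. k j - l j = 0) \<longleftrightarrow> k = l"
    proof
      assume H: "\<forall>j<d. k j - l j = 0"
      show "k = l"
      proof
        fix j show "k j = l j" using H kl by (cases "j < d") auto
      qed
    qed simp
    then show "(c k * cnj (c l)) * (if \<forall>j<d. k j - l j = 0 then (2*pi)^d else 0) = (c k * cnj (c l)) * (if k = l then (2*pi)^d else 0)"
      by simp
  qed
  also have "\<dots> = (\<Sum>k\<in>Q. (c k * cnj (c k)) * (2*pi)^d)"
  proof (intro sum.cong refl)
    fix k assume "k \<in> Q"
    have "(\<Sum>l\<in>Q. (c k * cnj (c l)) * (if k = l then (2*pi)^d else 0))
        = (\<Sum>l\<in>Q. if l = k then (c k * cnj (c l)) * (2*pi)^d else 0)"
      by (intro sum.cong refl) auto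
    also have "\<dots> = (c k * cnj (c k)) * (2*pi)^d"
      using Q(1) \<open>k \<in> Q\<close> by simp
    finally show "(\<Sum>l\<in>Q. (c k * cnj (c l)) * (if k = l then (2*pi)^d else 0)) = (c k * cnj (c k)) * (2*pi)^d" .
  qed
  also have "\<dots> = complex_of_real ((2*pi)^d * (\<Sum>k\<in>Q. (cmod (c k))^2))"
    by (simp add: complex_norm_square[symmetric] sum_distrib_left algebra_simps)
  finally show "(\<integral>x. indicator (torus d) x * (cmod (trig_poly d Q c x))^2 \<partial>PP d) = (2*pi)^d * (\<Sum>k\<in>Q. (cmod (c k))^2)"
    using of_real_eq_iff by blast
qed


lemma torus_sets: "torus d \<in> sets (PP d)"
  unfolding torus_def by (rule sets_PiM_I_finite) auto

lemma torus_emeasure: "emeasure (PP d) (torus d) = ennreal ((2*pi)^d)"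
proof -
  interpret product_sigma_finite "\<lambda>_::nat. lborel" by (rule PP_sf)
  have "emeasure (PP d) (torus d) = (\<Prod>j<d. emeasure lborel {0..<2*pi})"
    unfolding torus_def by (rule emeasure_PiM) auto
  also have "\<dots> = (\<Prod>j<d. ennreal (2*pi))" by simp
  also have "\<dots> = ennreal ((2*pi)^d)" by (simp add: prod_ennreal ennreal_power)
  finally show ?thesis .
qed

lemma torus_measure: "measure (lebesgue_d d) (torus d) = (2*pi)^d"
  unfolding lebesgue_d_def using torus_sets torus_emeasure
  by (simp add: measure_def)

lemma torus_nonempty: "torus d \<noteq> {}"
  unfolding torus_def by (auto simp: PiE_eq_empty_iff)

lemma trig_bound: "cmod (trig_poly d Q c x) \<le> (\<Sum>k\<in>Q. cmod (c k))"
  unfolding trig_poly_def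
  by (rule order_trans[OF norm_sum]) (simp add: norm_mult)

lemma meas_g: "(\<lambda>x. indicator (torus d) x * (cmod (trig_poly d Q c x))^2) \<in> borel_measurable (PP d)"
  using meas_trig[of d Q c] torus_sets[of d] by measurable


lemma main:
  assumes Q: "finite Q" "Q \<noteq> {}" "Q \<subseteq> lattice d"
    and B: "B \<subseteq> torus d" "B \<in> sets (lebesgue_d d)"
    and small: "norm_meas d B \<le> (1/2) / real (card Q)"
  shows "sup_norm (trig_poly d Q c) (torus d)
         \<le> 2 * sqrt (real (card Q)) * sup_norm (trig_poly d Q c) (torus d - B)"
proof -
  define f where "f = trig_poly d Q c"
  define T where "T = torus d"
  define L where "L = lebesgue_d d"
  define n where "n = real (card Q)"
  define S where "S = (\<Sum>k\<in>Q. cmod (c k))"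
  define M where "M = sup_norm f T"
  define m where "m = sup_norm f (T - B)"
  have "0 < card Q" using Q by (simp add: card_gt_0_iff)
  then have n1: "n \<ge> 1" unfolding n_def by simp
  have bd: "\<And>x. cmod (f x) \<le> S" unfolding f_def S_def by (rule trig_bound)
  have bdd: "bdd_above ((\<lambda>x. cmod (f x)) ` A)" for A
    using bd by (intro bdd_aboveI2) auto
  have Tne: "T \<noteq> {}" unfolding T_def by (rule torus_nonempty)
  have MT: "\<And>x. x \<in> T \<Longrightarrow> cmod (f x) \<le> M"
    unfolding M_def sup_norm_def by (rule cSUP_upper[OF _ bdd])
  have MS: "M \<le> S"
    unfolding M_def sup_norm_def by (rule cSUP_least[OF Tne]) (rule bd)
  have M0: "0 \<le> M" using Tne MT by (meson all_not_in_conv norm_ge_zero order_trans)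
  have mT: "\<And>x. x \<in> T - B \<Longrightarrow> cmod (f x) \<le> m"
    unfolding m_def sup_norm_def by (rule cSUP_upper[OF _ bdd])
  have LT: "measure L T = (2*pi)^d" unfolding L_def T_def by (rule torus_measure)
  have Tsets: "T \<in> sets L" unfolding L_def T_def lebesgue_d_def using torus_sets by simp
  have eT: "emeasure L T < \<infinity>"
    unfolding L_def T_def lebesgue_d_def using torus_sets torus_emeasure by simp
  have eB: "emeasure L B < \<infinity>"
    using emeasure_mono[OF B(1)[folded T_def] Tsets] eT by (simp add: L_def T_def)
  have nm: "norm_meas d B = measure L B / (2*pi)^d" unfolding norm_meas_def L_def ..
  have TB: "T - B \<noteq> {}"
  proof
    assume "T - B = {}"
    then have "B = T" using B(1) unfolding T_def by auto
    then have "norm_meas d B = 1" using nm LT by simp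
    moreover have "(1/2) / n < 1" using n1 by simp
    ultimately show False using small n_def by simp
  qed
  have m0: "0 \<le> m" using TB mT by (meson all_not_in_conv norm_ge_zero order_trans)
  have gi: "integrable L (\<lambda>x. indicator T x * (cmod (f x))^2)"
    unfolding L_def lebesgue_d_def T_def f_def
    using integrable_completion[OF meas_g] parseval(1)[OF Q(1) Q(3)] by simp
  have gv: "(\<integral>x. indicator T x * (cmod (f x))^2 \<partial>L) = (2*pi)^d * (\<Sum>k\<in>Q. (cmod (c k))^2)"
    unfolding L_def lebesgue_d_def T_def f_def
    using integral_completion[OF meas_g] parseval(2)[OF Q(1) Q(3)] by simp
  have hi: "integrable L (\<lambda>x. M^2 * indicator B x + m^2 * indicator T x)"
    using B(2) eB Tsets eT by (auto simp: L_def)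
  have "(\<integral>x. indicator T x * (cmod (f x))^2 \<partial>L) \<le> (\<integral>x. M^2 * indicator B x + m^2 * indicator T x \<partial>L)"
  proof (rule integral_mono[OF gi hi])
    fix x
    show "indicator T x * (cmod (f x))^2 \<le> M^2 * indicator B x + m^2 * indicator T x"
    proof (cases "x \<in> T")
      case False then show ?thesis using B(1) T_def by (auto simp: indicator_def)
    next
      case True
      show ?thesis
      proof (cases "x \<in> B")
        case True
        have "(cmod (f x))^2 \<le> M^2" using MT[OF \<open>x \<in> T\<close>] by (simp add: power_mono)
        then show ?thesis using True \<open>x \<in> T\<close> by (simp add: indicator_def add_increasing2)
      next
        case False
        have "(cmod (f x))^2 \<le> m^2" using mT \<open>x \<in> T\<close> False by (simp add: power_mono)
        then show ?thesis using False \<open>x \<in> T\<close> by (simp add: indicator_def)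
      qed
    qed
  qed
  also have "\<dots> = M^2 * measure L B + m^2 * measure L T"
    using B(2) eB Tsets eT by (simp add: L_def Bochner_Integration.integral_add)
  finally have ineq: "(2*pi)^d * (\<Sum>k\<in>Q. (cmod (c k))^2) \<le> M^2 * measure L B + m^2 * (2*pi)^d"
    using gv LT by simp
  have mB: "measure L B \<le> (2*pi)^d * ((1/2) / n)"
    using small nm n_def by (simp add: field_simps)
  have pos: "(0::real) < (2*pi)^d" by simp
  have "(2*pi)^d * (\<Sum>k\<in>Q. (cmod (c k))^2) \<le> (2*pi)^d * (M^2 * ((1/2) / n) + m^2)"
    using ineq mult_left_mono[OF mB, of "M^2"] by (simp add: algebra_simps)
  then have sq: "(\<Sum>k\<in>Q. (cmod (c k))^2) \<le> M^2 * ((1/2) / n) + m^2"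
    using pos by simp
  have "M^2 \<le> S^2" using M0 MS by (simp add: power_mono)
  also have "\<dots> \<le> (\<Sum>k\<in>Q. (cmod (c k))^2) * n"
    unfolding S_def n_def by (rule sum_squared_le_sum_of_squares)
  also have "\<dots> \<le> (M^2 * ((1/2) / n) + m^2) * n"
    using sq n1 by (simp add: mult_right_mono)
  also have "\<dots> = M^2 / 2 + n * m^2" using n1 by (simp add: field_simps)
  finally have "M^2 \<le> 2 * n * m^2" by simp
  then have "M \<le> sqrt (2 * n * m^2)" using M0 by (simp add: real_le_rsqrt)
  also have "\<dots> = sqrt 2 * sqrt n * m" using m0 by (simp add: real_sqrt_mult)
  also have "\<dots> \<le> 2 * sqrt n * m"
  proof -
    have "sqrt 2 \<le> (2::real)" by (rule real_le_lsqrt) auto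
    moreover have "0 \<le> sqrt n * m" using m0 n1 by simp
    ultimately show ?thesis using mult_right_mono[of "sqrt 2" 2 "sqrt n * m"] by (simp add: mult.assoc)
  qed
  finally show ?thesis unfolding M_def m_def n_def f_def T_def .
qed

theorem theorem5p2:
  shows "\<exists>c1>0. \<exists>C1>0. \<forall>(d::nat) (Q::(nat \<Rightarrow> int) set) (B::(nat \<Rightarrow> real) set)
           (c::(nat \<Rightarrow> int) \<Rightarrow> complex).
     finite Q \<and> Q \<noteq> {} \<and> Q \<subseteq> lattice d \<and>
     B \<subseteq> torus d \<and> B \<in> sets (lebesgue_d d) \<and>
     norm_meas d B \<le> c1 / real (card Q)
     \<longrightarrow> sup_norm (trig_poly d Q c) (torus d)
         \<le> C1 * sqrt (real (card Q)) * sup_norm (trig_poly d Q c) (torus d - B)"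
proof (rule exI[of _ "1/2"], rule conjI, simp, rule exI[of _ "2::real"], rule conjI, simp, intro allI impI)
  fix d Q B c
  assume H: "finite Q \<and> Q \<noteq> {} \<and> Q \<subseteq> lattice d \<and>
     B \<subseteq> torus d \<and> B \<in> sets (lebesgue_d d) \<and>
     norm_meas d B \<le> (1/2) / real (card Q)"
  show "sup_norm (trig_poly d Q c) (torus d)
         \<le> 2 * sqrt (real (card Q)) * sup_norm (trig_poly d Q c) (torus d - B)"
    using H by (intro main) auto
qed

end
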